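(* Let $q_1,q_2,q_3,q_4\in\widehat{\mathbb H}$ be four distinct points and let $q'_1,q'_2,q'_3,q'_4\in\widehat{\mathbb H}$ be another quadruple of distinct points. Then there exists a fractional linear transformation $T$ of $\widehat{\mathbb H}$ with $T(q_n)=q'_n$ for $n=1,2,3,4$ if and only if $$R_{\mathbb H}(q_1,q_2,q_3,q_4)=R_{\mathbb H}(q'_1,q'_2,q'_3,q'_4).$$
   Context: $\mathbb H$ denotes the quaternions, with conjugate $\bar q$, norm $|q|=\sqrt{q\bar q}$, real part $\operatorname{Re} q=(q+\bar q)/2$; $\widehat{\mathbb H}=\mathbb H\cup\{\infty\}$. The group $GL(2,\mathbb H)$ of invertible $2\times 2$ quaternionic matrices acts on $\widehat{\mathbb H}$ by fractional linear transformations $\pi(\gamma)(q)=(aq+b)(cq+d)^{-1}$ for $\gamma=\begin{pmatrix}a&b\\c&d\end{pmatrix}$; a fractional linear transformation is a map of the form $\pi(\gamma)$. For four distinct points $q_1,q_2,q_3,q_4\in\widehat{\mathbb H}$ the cross-ratio is $Q(q_1,q_2,q_3,q_4)=(q_2-q_1)^{-1}(q_4-q_1)(q_4-q_3)^{-1}(q_2-q_3)\in\mathbb H$, where if some $q_n=\infty$ the value is defined by letting $q_n\to\infty$ and taking the limit. Define $R_{\mathbb H}(q_1,q_2,q_3,q_4)=\bigl(|Q(q_1,q_2,q_3,q_4)|,\operatorname{Re}Q(q_1,q_2,q_3,q_4)\bigr)\in\mathbb R^2$. *)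

theory Defs
  imports Complex_Main
begin

datatype quat = Quat (qr: real) (qi: real) (qj: real) (qk: real)

definition qzero :: quat where "qzero = Quat 0 0 0 0"
definition qone :: quat where "qone = Quat 1 0 0 0"

definition qadd :: "quat \<Rightarrow> quat \<Rightarrow> quat" where
  "qadd p q = Quat (qr p + qr q) (qi p + qi q) (qj p + qj q) (qk p + qk q)"

definition qsub :: "quat \<Rightarrow> quat \<Rightarrow> quat" where
  "qsub p q = Quat (qr p - qr q) (qi p - qi q) (qj p - qj q) (qk p - qk q)"

definition qmul :: "quat \<Rightarrow> quat \<Rightarrow> quat" where
  "qmul p q = Quat
     (qr p * qr q - qi p * qi q - qj p * qj q - qk p * qk q)
     (qr p * qi q + qi p * qr q + qj p * qk q - qk p * qj q)
     (qr p * qj q - qi p * qk q + qj p * qr q + qk p * qi q)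
     (qr p * qk q + qi p * qj q - qj p * qi q + qk p * qr q)"

definition qcnj :: "quat \<Rightarrow> quat" where
  "qcnj q = Quat (qr q) (- qi q) (- qj q) (- qk q)"

definition qnormsq :: "quat \<Rightarrow> real" where
  "qnormsq q = (qr q)^2 + (qi q)^2 + (qj q)^2 + (qk q)^2"

definition qnorm :: "quat \<Rightarrow> real" where
  "qnorm q = sqrt (qnormsq q)"

definition qinv :: "quat \<Rightarrow> quat" where
  "qinv q = Quat (qr q / qnormsq q) (- qi q / qnormsq q) (- qj q / qnormsq q) (- qk q / qnormsq q)"

definition qRe :: "quat \<Rightarrow> real" where
  "qRe q = qr (qadd q (qcnj q)) / 2"

datatype qext = Fin quat | Infty

text \<open>2x2 quaternionic matrices (a, b, c, d) = [[a, b], [c, d]].\<close>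
type_synonym qmat = "quat \<times> quat \<times> quat \<times> quat"

fun qmat_mult :: "qmat \<Rightarrow> qmat \<Rightarrow> qmat" where
  "qmat_mult (a, b, c, d) (a', b', c', d') =
     (qadd (qmul a a') (qmul b c'), qadd (qmul a b') (qmul b d'),
      qadd (qmul c a') (qmul d c'), qadd (qmul c b') (qmul d d'))"

definition qmat_id :: qmat where "qmat_id = (qone, qzero, qzero, qone)"

definition qGL2 :: "qmat \<Rightarrow> bool" where
  "qGL2 g \<longleftrightarrow> (\<exists>h. qmat_mult g h = qmat_id \<and> qmat_mult h g = qmat_id)"

text \<open>Action pi(gamma)(q) = (a q + b)(c q + d)^{-1}, extended to infinity
  (value at a pole is infinity; value at infinity is the limit a c^{-1}, or infinity if c = 0).\<close>
fun flt :: "qmat \<Rightarrow> qext \<Rightarrow> qext" where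
  "flt (a, b, c, d) (Fin q) =
     (if qadd (qmul c q) d = qzero then Infty
      else Fin (qmul (qadd (qmul a q) b) (qinv (qadd (qmul c q) d))))"
| "flt (a, b, c, d) Infty = (if c = qzero then Infty else Fin (qmul a (qinv c)))"

text \<open>Cross-ratio Q(q1,q2,q3,q4) = (q2-q1)^{-1}(q4-q1)(q4-q3)^{-1}(q2-q3); when one point is
  infinity, the limiting expression (for q2 = infinity the value is determined up to
  conjugation, which does not affect |Q| and Re Q; we take the representative
  (q4-q1)(q4-q3)^{-1}). Other patterns (several infinite points) are irrelevant.\<close>
fun qcr :: "qext \<Rightarrow> qext \<Rightarrow> qext \<Rightarrow> qext \<Rightarrow> quat" where
  "qcr (Fin q1) (Fin q2) (Fin q3) (Fin q4) =
     qmul (qmul (qmul (qinv (qsub q2 q1)) (qsub q4 q1)) (qinv (qsub q4 q3))) (qsub q2 q3)"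
| "qcr Infty (Fin q2) (Fin q3) (Fin q4) = qmul (qinv (qsub q4 q3)) (qsub q2 q3)"
| "qcr (Fin q1) Infty (Fin q3) (Fin q4) = qmul (qsub q4 q1) (qinv (qsub q4 q3))"
| "qcr (Fin q1) (Fin q2) Infty (Fin q4) = qmul (qinv (qsub q2 q1)) (qsub q4 q1)"
| "qcr (Fin q1) (Fin q2) (Fin q3) Infty = qmul (qinv (qsub q2 q1)) (qsub q2 q3)"
| "qcr _ _ _ _ = qzero"

definition RH :: "qext \<Rightarrow> qext \<Rightarrow> qext \<Rightarrow> qext \<Rightarrow> real \<times> real" where
  "RH q1 q2 q3 q4 = (qnorm (qcr q1 q2 q3 q4), qRe (qcr q1 q2 q3 q4))"

end

theory Submission
  imports Defs
begin


instantiation quat :: division_ring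
begin
definition zero_quat_def: "0 = qzero"
definition one_quat_def: "1 = qone"
definition plus_quat_def: "p + q = qadd p q"
definition minus_quat_def: "p - q = qsub p q"
definition uminus_quat_def: "- q = Quat (- qr q) (- qi q) (- qj q) (- qk q)"
definition times_quat_def: "p * q = qmul p q"
definition inverse_quat_def: "inverse q = qinv q"
definition divide_quat_def: "(p::quat) div q = p * qinv q"

lemma qnormsq_pos: "q \<noteq> qzero \<Longrightarrow> qnormsq q > 0"
proof -
  assume "q \<noteq> qzero"
  hence "qr q \<noteq> 0 \<or> qi q \<noteq> 0 \<or> qj q \<noteq> 0 \<or> qk q \<noteq> 0"
    by (cases q) (auto simp: qzero_def)
  moreover have "0 \<le> (qr q)^2" "0 \<le> (qi q)^2" "0 \<le> (qj q)^2" "0 \<le> (qk q)^2" by auto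
  ultimately show ?thesis unfolding qnormsq_def
    by (smt (verit) power2_less_0 zero_less_power2)
qed

instance
proof
  fix a b c :: quat
  show "a * b * c = a * (b * c)" by (rule quat.expand) (simp add: times_quat_def qmul_def algebra_simps)
  show "a + b + c = a + (b + c)" by (rule quat.expand) (simp add: plus_quat_def qadd_def algebra_simps)
  show "a + b = b + a" by (rule quat.expand) (simp add: plus_quat_def qadd_def algebra_simps)
  show "0 + a = a" by (rule quat.expand) (simp add: plus_quat_def zero_quat_def qzero_def qadd_def)
  show "1 * a = a" by (rule quat.expand) (simp add: times_quat_def one_quat_def qone_def qmul_def)
  show "a * 1 = a" by (rule quat.expand) (simp add: times_quat_def one_quat_def qone_def qmul_def)
  show "- a + a = 0" by (rule quat.expand) (simp add: plus_quat_def uminus_quat_def zero_quat_def qzero_def qadd_def)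
  show "a - b = a + - b" by (rule quat.expand) (simp add: plus_quat_def uminus_quat_def minus_quat_def qsub_def qadd_def)
  show "(a + b) * c = a * c + b * c" by (rule quat.expand) (simp add: times_quat_def plus_quat_def qmul_def qadd_def algebra_simps)
  show "a * (b + c) = a * b + a * c" by (rule quat.expand) (simp add: times_quat_def plus_quat_def qmul_def qadd_def algebra_simps)
  show "(0::quat) \<noteq> 1" by (simp add: zero_quat_def one_quat_def qzero_def qone_def)
  show "a div b = a * inverse b" by (simp add: divide_quat_def inverse_quat_def)
  show "inverse (0::quat) = 0" by (simp add: inverse_quat_def qinv_def zero_quat_def qzero_def)
  assume "a \<noteq> 0"
  hence n: "qnormsq a > 0" using qnormsq_pos zero_quat_def by auto
  hence n0: "qnormsq a \<noteq> 0" by simp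
  show "inverse a * a = 1" 
    using n0 by (intro quat.expand) (simp_all add: times_quat_def inverse_quat_def qinv_def qmul_def one_quat_def qone_def field_simps, simp_all add: qnormsq_def power2_eq_square)
  show "a * inverse a = 1" 
    using n0 by (intro quat.expand) (simp_all add: times_quat_def inverse_quat_def qinv_def qmul_def one_quat_def qone_def field_simps, simp_all add: qnormsq_def power2_eq_square)
qed
end




lemma qbridge: "qzero = 0" "qone = 1" "qadd p q = p + q" "qsub p q = p - q"
  "qmul p q = p * q" "qinv p = inverse p"
  by (simp_all add: zero_quat_def one_quat_def plus_quat_def minus_quat_def times_quat_def inverse_quat_def)

lemma qRe_eq: "qRe q = qr q" by (simp add: qRe_def qadd_def qcnj_def)

lemma qr_mult_commute: "qr (p*q) = qr (q*p)"
  by (simp add: times_quat_def qmul_def algebra_simps)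

lemma qnormsq_mult: "qnormsq (p*q) = qnormsq p * qnormsq q"
  by (simp add: times_quat_def qmul_def qnormsq_def power2_eq_square algebra_simps)

lemma qnormsq_one: "qnormsq 1 = 1" by (simp add: one_quat_def qone_def qnormsq_def)

lemma qnormsq_inverse: "qnormsq (inverse p) = inverse (qnormsq p)"
proof (cases "p = 0")
  case True
  have "qnormsq 0 = 0" by (simp add: qnormsq_def zero_quat_def qzero_def)
  thus ?thesis using True by simp
next
  case False
  have "qnormsq (inverse p) * qnormsq p = 1"
    using False by (metis qnormsq_mult left_inverse qnormsq_one)
  thus ?thesis by (metis inverse_unique mult.commute)
qed

lemma conj_inv: "qnormsq (l*q*inverse l) = qnormsq q \<and> qr (l*q*inverse l) = qr q" if "l \<noteq> 0"
proof
  have "qnormsq l \<noteq> 0" using that qnormsq_pos qbridge(1) by fastforce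
  thus "qnormsq (l*q*inverse l) = qnormsq q" by (simp add: qnormsq_mult qnormsq_inverse)
  have "qr (l*q*inverse l) = qr (inverse l * (l * q))" by (metis qr_mult_commute mult.assoc)
  also have "\<dots> = qr q" using that by (simp add: mult.assoc[symmetric])
  finally show "qr (l*q*inverse l) = qr q" .
qed

lemma conj_core:
  fixes r a b c a' b' c' S :: real
  assumes S1: "S = a*a+b*b+c*c" and S2: "S = a'*a'+b'*b'+c'*c'"
  shows "\<exists>l. l \<noteq> 0 \<and> l * Quat r a b c = Quat r a' b' c' * l"
proof (cases "S + a*a'+b*b'+c*c' = 0 \<and> b'*c - c'*b = 0 \<and> c'*a - a'*c = 0 \<and> a'*b - b'*a = 0")
  case False
  let ?l = "Quat (S + a*a'+b*b'+c*c') (-(b'*c - c'*b)) (-(c'*a - a'*c)) (-(a'*b - b'*a))"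
  have "?l \<noteq> 0" using False by (auto simp: zero_quat_def qzero_def)
  moreover have "?l * Quat r a b c = Quat r a' b' c' * ?l"
    unfolding times_quat_def qmul_def using S1 S2 by (simp, algebra)
  ultimately show ?thesis by blast
next
  case True
  have "(a+a')^2 + (b+b')^2 + (c+c')^2 = 0" using True S1 S2 by algebra
  hence e: "a' = -a" "b' = -b" "c' = -c"
    by (smt (verit) power2_less_0 zero_less_power2 sum_power2_eq_zero_iff)+
  show ?thesis
  proof (cases "a = 0 \<and> b = 0")
    case True
    let ?l = "Quat 0 1 0 0"
    have "?l \<noteq> 0" by (auto simp: zero_quat_def qzero_def)
    moreover have "?l * Quat r a b c = Quat r a' b' c' * ?l"
      unfolding times_quat_def qmul_def using e True by simp
    ultimately show ?thesis by blast
  next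
    case False
    let ?l = "Quat 0 (-b) a 0"
    have "?l \<noteq> 0" using False by (auto simp: zero_quat_def qzero_def)
    moreover have "?l * Quat r a b c = Quat r a' b' c' * ?l"
      unfolding times_quat_def qmul_def using e by (simp add: algebra_simps)
    ultimately show ?thesis by blast
  qed
qed

lemma conj_exists:
  assumes "qnormsq p = qnormsq q" "qr p = qr q"
  shows "\<exists>l. l \<noteq> 0 \<and> q = l * p * inverse l"
proof -
  obtain r a b c where p: "p = Quat r a b c" by (cases p)
  obtain a' b' c' where q: "q = Quat r a' b' c'" using assms(2) p by (cases q) auto
  have "a*a+b*b+c*c = a'*a'+b'*b'+c'*c'" using assms(1) p q by (simp add: qnormsq_def power2_eq_square)
  then obtain l where l: "l \<noteq> 0" "l * p = q * l" using conj_core[of "a*a+b*b+c*c" a b c a' b' c' r] p q by auto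
  hence "q = l * p * inverse l" by (simp add: mult.assoc)
  thus ?thesis using l by blast
qed




lemma qmat_mult_assoc: "qmat_mult (qmat_mult g h) k = qmat_mult g (qmat_mult h k)"
  by (cases g rule: prod_cases4; cases h rule: prod_cases4; cases k rule: prod_cases4)
     (simp add: qbridge algebra_simps)

definition hom :: "qext \<Rightarrow> quat \<times> quat" where
  "hom p = (case p of Fin q \<Rightarrow> (q, 1) | Infty \<Rightarrow> (1, 0))"
definition proj :: "quat \<times> quat \<Rightarrow> qext" where
  "proj v = (if snd v = 0 then Infty else Fin (fst v * inverse (snd v)))"
fun app :: "qmat \<Rightarrow> quat \<times> quat \<Rightarrow> quat \<times> quat" where
  "app (a, b, c, d) (x, y) = (a*x + b*y, c*x + d*y)"
definition smul :: "quat \<times> quat \<Rightarrow> quat \<Rightarrow> quat \<times> quat" where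
  "smul v l = (fst v * l, snd v * l)"

lemma flt_proj: "flt g p = proj (app g (hom p))"
  by (cases g rule: prod_cases4; cases p) (simp_all add: qbridge hom_def proj_def)

lemma app_mult: "app (qmat_mult g h) v = app g (app h v)"
  by (cases g rule: prod_cases4; cases h rule: prod_cases4; cases v) (simp add: qbridge algebra_simps)

lemma app_smul: "app g (smul v l) = smul (app g v) l"
  by (cases g rule: prod_cases4; cases v) (simp add: smul_def algebra_simps)

lemma proj_smul: "l \<noteq> 0 \<Longrightarrow> proj (smul v l) = proj v"
  by (cases v) (simp add: proj_def smul_def nonzero_inverse_mult_distrib mult.assoc, simp add: mult.assoc[symmetric])

lemma hom_proj: assumes "v \<noteq> (0,0)" shows "\<exists>l. l \<noteq> 0 \<and> v = smul (hom (proj v)) l"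
proof (cases v)
  case (Pair x y)
  show ?thesis
  proof (cases "y = 0")
    case True
    hence "x \<noteq> 0" using assms Pair by auto
    thus ?thesis using True Pair by (auto simp: proj_def hom_def smul_def intro!: exI[of _ x])
  next
    case False
    thus ?thesis using Pair by (auto simp: proj_def hom_def smul_def mult.assoc intro!: exI[of _ y])
  qed
qed

lemma app_id: "app qmat_id v = v"
  by (cases v) (simp add: qmat_id_def qbridge)

lemma app_zero: "app g (0,0) = (0,0)"
  by (cases g rule: prod_cases4) simp

lemma app_nonzero: "qGL2 g \<Longrightarrow> v \<noteq> (0,0) \<Longrightarrow> app g v \<noteq> (0,0)"
  unfolding qGL2_def by (metis app_id app_mult app_zero)

lemma hom_nonzero: "hom p \<noteq> (0,0)" by (cases p) (auto simp: hom_def)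

lemma flt_comp: assumes "qGL2 h" shows "flt (qmat_mult g h) p = flt g (flt h p)"
proof -
  let ?w = "app h (hom p)"
  have "?w \<noteq> (0,0)" using app_nonzero[OF assms hom_nonzero] .
  then obtain l where l: "l \<noteq> 0" "?w = smul (hom (proj ?w)) l" using hom_proj by blast
  have "flt (qmat_mult g h) p = proj (app g ?w)" by (simp add: flt_proj app_mult)
  also have "\<dots> = proj (smul (app g (hom (proj ?w))) l)" by (subst l(2)) (simp add: app_smul)
  also have "\<dots> = flt g (flt h p)" using l(1) by (simp add: proj_smul flt_proj)
  finally show ?thesis .
qed

lemma flt_id: "flt qmat_id p = p"
  by (cases p) (simp_all add: qmat_id_def qbridge)

lemma qGL2_mult: "qGL2 g \<Longrightarrow> qGL2 h \<Longrightarrow> qGL2 (qmat_mult g h)"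
  unfolding qGL2_def
proof (elim exE conjE)
  fix g' h' assume a: "qmat_mult g g' = qmat_id" "qmat_mult g' g = qmat_id"
    "qmat_mult h h' = qmat_id" "qmat_mult h' h = qmat_id"
  have idl: "qmat_mult qmat_id k = k" for k by (cases k rule: prod_cases4) (simp add: qmat_id_def qbridge)
  show "\<exists>k. qmat_mult (qmat_mult g h) k = qmat_id \<and> qmat_mult k (qmat_mult g h) = qmat_id"
    apply (rule exI[of _ "qmat_mult h' g'"])
    apply (rule conjI)
     apply (metis qmat_mult_assoc a idl)
    by (metis qmat_mult_assoc a idl)
qed

lemma qGL2_inv: "qGL2 g \<Longrightarrow> \<exists>h. qGL2 h \<and> (\<forall>p. flt h (flt g p) = p) \<and> (\<forall>p. flt g (flt h p) = p)"
proof -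
  assume g: "qGL2 g"
  then obtain h where h: "qmat_mult g h = qmat_id" "qmat_mult h g = qmat_id" unfolding qGL2_def by blast
  have hg: "qGL2 h" using h unfolding qGL2_def by blast
  show ?thesis
    using h flt_comp[OF g, of h] flt_comp[OF hg, of g] hg by (metis flt_id)
qed

lemma stabilizer:
  assumes "flt G (Fin 0) = Fin 0" "flt G Infty = Infty" "flt G (Fin 1) = Fin 1"
  shows "\<exists>l. l \<noteq> 0 \<and> (\<forall>x. flt G (Fin x) = Fin (l * x * inverse l))"
proof -
  obtain a b c d where G: "G = (a,b,c,d)" by (cases G rule: prod_cases4)
  have c: "c = 0" using assms(2) G by (simp add: qbridge split: if_splits)
  have d: "d \<noteq> 0" "b = 0" using assms(1) G c by (auto simp add: qbridge split: if_splits)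
  have "a * inverse d = 1" using assms(3) G c d by (simp add: qbridge split: if_splits)
  hence a: "a = d" using d by (metis mult.assoc left_inverse mult_1_right mult_1_left)
  show ?thesis using G c d a by (auto simp: qbridge intro!: exI[of _ d])
qed

definition Dm :: "quat \<Rightarrow> quat \<Rightarrow> qmat" where "Dm a d = (a, 0, 0, d)"
definition Tm :: "quat \<Rightarrow> qmat" where "Tm b = (1, b, 0, 1)"
definition Jm :: qmat where "Jm = (0, 1, 1, 0)"

lemma qGL2_D: "a \<noteq> 0 \<Longrightarrow> d \<noteq> 0 \<Longrightarrow> qGL2 (Dm a d)"
  unfolding qGL2_def Dm_def by (rule exI[of _ "Dm (inverse a) (inverse d)"]) (simp add: Dm_def qbridge qmat_id_def)
lemma qGL2_T: "qGL2 (Tm b)"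
  unfolding qGL2_def Tm_def by (rule exI[of _ "Tm (- b)"]) (simp add: Tm_def qbridge qmat_id_def)
lemma qGL2_J: "qGL2 Jm"
  unfolding qGL2_def Jm_def by (rule exI[of _ "Jm"]) (simp add: Jm_def qbridge qmat_id_def)

lemma qGL2_M: assumes "q1 \<noteq> q3" shows "qGL2 (1, - q1, 1, - q3)"
proof -
  have "(1, - q1, 1, - q3) = qmat_mult (Tm 1) (qmat_mult (Dm (q3 - q1) 1) (qmat_mult Jm (Tm (- q3))))"
    by (simp add: Tm_def Dm_def Jm_def qbridge algebra_simps)
  moreover have "q3 - q1 \<noteq> 0" using assms by simp
  ultimately show ?thesis by (metis qGL2_mult qGL2_T qGL2_D qGL2_J one_neq_zero)
qed

lemma qGL2_S: assumes "q1 \<noteq> q3" "al \<noteq> 0" "be \<noteq> 0" shows "qGL2 (al, - (al * q1), be, - (be * q3))"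
proof -
  have "(al, - (al * q1), be, - (be * q3)) = qmat_mult (Dm al be) (1, - q1, 1, - q3)"
    by (simp add: Dm_def qbridge)
  thus ?thesis using assms qGL2_M qGL2_D qGL2_mult by metis
qed

lemma qGL2_S1: assumes "be \<noteq> 0" shows "qGL2 (0, 1, be, - (be * q3))"
proof -
  have "(0, 1, be, - (be * q3)) = qmat_mult (Dm 1 be) (qmat_mult Jm (Tm (- q3)))"
    by (simp add: Tm_def Dm_def Jm_def qbridge algebra_simps)
  thus ?thesis using assms by (metis qGL2_mult qGL2_T qGL2_D qGL2_J one_neq_zero)
qed

lemma qGL2_S3: assumes "al \<noteq> 0" shows "qGL2 (al, - (al * q1), 0, 1)"
proof -
  have "(al, - (al * q1), 0, 1) = qmat_mult (Dm al 1) (Tm (- q1))"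
    by (simp add: Tm_def Dm_def qbridge algebra_simps)
  thus ?thesis using assms by (metis qGL2_mult qGL2_T qGL2_D one_neq_zero)
qed

lemma qGL2_conj: "l \<noteq> 0 \<Longrightarrow> qGL2 (l, 0, 0, l)"
  using qGL2_D[of l l] by (simp add: Dm_def)




lemma flt_S_fin:
  assumes "x \<noteq> x3" "be \<noteq> 0"
  shows "flt (al, - (al * x1), be, - (be * x3)) (Fin x) = Fin (al * (x - x1) * inverse (x - x3) * inverse be)"
proof -
  have e1: "be * x - be * x3 = be * (x - x3)" by (simp add: algebra_simps)
  have e2: "al * x - al * x1 = al * (x - x1)" by (simp add: algebra_simps)
  have ne: "be * (x - x3) \<noteq> 0" using assms by simp
  show ?thesis using ne assms
    by (simp add: qbridge e1 e2 nonzero_inverse_mult_distrib mult.assoc)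
qed

lemma normal_fin:
  assumes "distinct [Fin x1, Fin x2, Fin x3, q4]"
  shows "\<exists>S. qGL2 S \<and> flt S (Fin x1) = Fin 0 \<and> flt S (Fin x2) = Fin 1 \<and> flt S (Fin x3) = Infty
     \<and> flt S q4 = Fin (qcr (Fin x1) (Fin x2) (Fin x3) q4)"
proof -
  define al where "al = inverse (x2 - x1)"
  define be where "be = inverse (x2 - x3)"
  have d: "x1 \<noteq> x2" "x1 \<noteq> x3" "x2 \<noteq> x3" using assms by auto
  have al: "al \<noteq> 0" "al * (x2 - x1) = 1" using d by (simp_all add: al_def)
  have be: "be \<noteq> 0" "inverse be = x2 - x3" using d by (simp_all add: be_def)
  let ?S = "(al, - (al * x1), be, - (be * x3))"
  have "qGL2 ?S" using qGL2_S d(2) al(1) be(1) by blast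
  moreover have "flt ?S (Fin x1) = Fin 0" using d be flt_S_fin[of x1 x3 be al x1] by simp
  moreover have "flt ?S (Fin x2) = Fin 1" using d be al flt_S_fin[of x2 x3 be al x1]
    by (simp add: mult.assoc[symmetric])
  moreover have "flt ?S (Fin x3) = Infty" by (simp add: qbridge)
  moreover have "flt ?S q4 = Fin (qcr (Fin x1) (Fin x2) (Fin x3) q4)"
  proof (cases q4)
    case (Fin x4)
    hence "x4 \<noteq> x3" using assms by auto
    thus ?thesis using Fin flt_S_fin[of x4 x3 be al x1] be
      by (simp add: qbridge al_def mult.assoc)
  next
    case Infty
    thus ?thesis using be by (simp add: qbridge al_def)
  qed
  ultimately show ?thesis by blast
qed

lemma normal_inf1:
  assumes "distinct [Infty, Fin x2, Fin x3, Fin x4]"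
  shows "\<exists>S. qGL2 S \<and> flt S Infty = Fin 0 \<and> flt S (Fin x2) = Fin 1 \<and> flt S (Fin x3) = Infty
     \<and> flt S (Fin x4) = Fin (qcr Infty (Fin x2) (Fin x3) (Fin x4))"
proof -
  define be where "be = inverse (x2 - x3)"
  have d: "x2 \<noteq> x3" "x4 \<noteq> x3" using assms by auto
  have be: "be \<noteq> 0" "inverse be = x2 - x3" using d by (simp_all add: be_def)
  let ?S = "(0, 1, be, - (be * x3))"
  have f: "flt ?S (Fin x) = Fin (inverse (x - x3) * inverse be)" if "x \<noteq> x3" for x
  proof -
    have e1: "be * x - be * x3 = be * (x - x3)" by (simp add: algebra_simps)
    show ?thesis using that be by (simp add: qbridge e1 nonzero_inverse_mult_distrib)
  qed
  have "qGL2 ?S" using qGL2_S1 be(1) by blast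
  moreover have "flt ?S Infty = Fin 0" using be by (simp add: qbridge)
  moreover have "flt ?S (Fin x2) = Fin 1" using d be f[of x2] by simp
  moreover have "flt ?S (Fin x3) = Infty" by (simp add: qbridge)
  moreover have "flt ?S (Fin x4) = Fin (qcr Infty (Fin x2) (Fin x3) (Fin x4))"
    using d be f[of x4] by (simp add: qbridge)
  ultimately show ?thesis by blast
qed

lemma normal_inf2:
  assumes "distinct [Fin x1, Infty, Fin x3, Fin x4]"
  shows "\<exists>S. qGL2 S \<and> flt S (Fin x1) = Fin 0 \<and> flt S Infty = Fin 1 \<and> flt S (Fin x3) = Infty
     \<and> flt S (Fin x4) = Fin (qcr (Fin x1) Infty (Fin x3) (Fin x4))"
proof -
  have d: "x1 \<noteq> x3" "x4 \<noteq> x3" using assms by auto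
  let ?S = "(1, - x1, 1, - x3)"
  have f: "flt ?S (Fin x) = Fin ((x - x1) * inverse (x - x3))" if "x \<noteq> x3" for x
    using that by (simp add: qbridge)
  have "qGL2 ?S" using qGL2_M d(1) by blast
  moreover have "flt ?S (Fin x1) = Fin 0" using d f[of x1] by simp
  moreover have "flt ?S Infty = Fin 1" by (simp add: qbridge)
  moreover have "flt ?S (Fin x3) = Infty" by (simp add: qbridge)
  moreover have "flt ?S (Fin x4) = Fin (qcr (Fin x1) Infty (Fin x3) (Fin x4))"
    using d f[of x4] by (simp add: qbridge)
  ultimately show ?thesis by blast
qed

lemma normal_inf3:
  assumes "distinct [Fin x1, Fin x2, Infty, Fin x4]"
  shows "\<exists>S. qGL2 S \<and> flt S (Fin x1) = Fin 0 \<and> flt S (Fin x2) = Fin 1 \<and> flt S Infty = Infty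
     \<and> flt S (Fin x4) = Fin (qcr (Fin x1) (Fin x2) Infty (Fin x4))"
proof -
  define al where "al = inverse (x2 - x1)"
  have d: "x1 \<noteq> x2" using assms by auto
  have al: "al \<noteq> 0" "al * (x2 - x1) = 1" using d by (simp_all add: al_def)
  let ?S = "(al, - (al * x1), 0, 1)"
  have f: "flt ?S (Fin x) = Fin (al * (x - x1))" for x
    by (simp add: qbridge algebra_simps)
  have "qGL2 ?S" using qGL2_S3 al(1) by blast
  moreover have "flt ?S (Fin x1) = Fin 0" using f[of x1] by simp
  moreover have "flt ?S (Fin x2) = Fin 1" using f[of x2] al by simp
  moreover have "flt ?S Infty = Infty" by (simp add: qbridge)
  moreover have "flt ?S (Fin x4) = Fin (qcr (Fin x1) (Fin x2) Infty (Fin x4))"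
    using f[of x4] by (simp add: qbridge al_def)
  ultimately show ?thesis by blast
qed

lemma normal_exists:
  assumes "distinct [q1, q2, q3, q4]"
  shows "\<exists>S. qGL2 S \<and> flt S q1 = Fin 0 \<and> flt S q2 = Fin 1 \<and> flt S q3 = Infty
     \<and> flt S q4 = Fin (qcr q1 q2 q3 q4)"
proof (cases q1)
  case (Fin x1) note q1 = this
  show ?thesis
  proof (cases q2)
    case (Fin x2) note q2 = this
    show ?thesis
    proof (cases q3)
      case (Fin x3)
      thus ?thesis using normal_fin assms q1 q2 by blast
    next
      case Infty
      then obtain x4 where "q4 = Fin x4" using assms by (cases q4) auto
      thus ?thesis using normal_inf3 assms q1 q2 Infty by blast
    qed
  next
    case Infty
    then obtain x3 x4 where "q3 = Fin x3" "q4 = Fin x4" using assms by (cases q3; cases q4) auto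
    thus ?thesis using normal_inf2 assms q1 Infty by blast
  qed
next
  case Infty
  then obtain x2 x3 x4 where "q2 = Fin x2" "q3 = Fin x3" "q4 = Fin x4"
    using assms by (cases q2; cases q3; cases q4) auto
  thus ?thesis using normal_inf1 assms Infty by blast
qed




lemma normal_conj:
  assumes "distinct [q1, q2, q3, q4]" "qGL2 S"
    "flt S q1 = Fin 0" "flt S q2 = Fin 1" "flt S q3 = Infty"
  shows "\<exists>l. l \<noteq> 0 \<and> flt S q4 = Fin (l * qcr q1 q2 q3 q4 * inverse l)"
proof -
  obtain S0 where S0: "qGL2 S0" "flt S0 q1 = Fin 0" "flt S0 q2 = Fin 1" "flt S0 q3 = Infty"
     "flt S0 q4 = Fin (qcr q1 q2 q3 q4)" using normal_exists[OF assms(1)] by blast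
  obtain H where H: "qGL2 H" "\<forall>p. flt H (flt S0 p) = p" using qGL2_inv[OF S0(1)] by blast
  let ?G = "qmat_mult S H"
  have G: "flt ?G x = flt S (flt H x)" for x using flt_comp[OF H(1)] .
  have "flt ?G (Fin 0) = Fin 0" "flt ?G Infty = Infty" "flt ?G (Fin 1) = Fin 1"
    using G H(2) S0 assms by metis+
  then obtain l where l: "l \<noteq> 0" "\<forall>x. flt ?G (Fin x) = Fin (l * x * inverse l)"
    using stabilizer by blast
  have "flt S q4 = flt ?G (Fin (qcr q1 q2 q3 q4))" using G H(2) S0(5) by metis
  thus ?thesis using l by auto
qed

lemma RH_iff: "RH q1 q2 q3 q4 = RH p1 p2 p3 p4 \<longleftrightarrow>
   qnormsq (qcr q1 q2 q3 q4) = qnormsq (qcr p1 p2 p3 p4) \<and> qr (qcr q1 q2 q3 q4) = qr (qcr p1 p2 p3 p4)"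
proof -
  have nn: "qnormsq x \<ge> 0" for x by (simp add: qnormsq_def)
  show ?thesis unfolding RH_def qnorm_def qRe_eq using nn by (auto simp: real_sqrt_eq_iff)
qed

theorem mainTheorem1:
  fixes q1 q2 q3 q4 p1 p2 p3 p4 :: qext
  assumes "distinct [q1, q2, q3, q4]"
    and "distinct [p1, p2, p3, p4]"
  shows "(\<exists>g. qGL2 g \<and> flt g q1 = p1 \<and> flt g q2 = p2 \<and> flt g q3 = p3 \<and> flt g q4 = p4)
         \<longleftrightarrow> RH q1 q2 q3 q4 = RH p1 p2 p3 p4"
proof
  assume "\<exists>g. qGL2 g \<and> flt g q1 = p1 \<and> flt g q2 = p2 \<and> flt g q3 = p3 \<and> flt g q4 = p4"
  then obtain g where g: "qGL2 g" "flt g q1 = p1" "flt g q2 = p2" "flt g q3 = p3" "flt g q4 = p4" by blast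
  obtain S where S: "qGL2 S" "flt S p1 = Fin 0" "flt S p2 = Fin 1" "flt S p3 = Infty"
     "flt S p4 = Fin (qcr p1 p2 p3 p4)" using normal_exists[OF assms(2)] by blast
  let ?T = "qmat_mult S g"
  have T: "flt ?T x = flt S (flt g x)" for x using flt_comp[OF g(1)] .
  have "qGL2 ?T" using qGL2_mult S(1) g(1) by blast
  moreover have "flt ?T q1 = Fin 0" "flt ?T q2 = Fin 1" "flt ?T q3 = Infty" using T g S by auto
  ultimately obtain l where l: "l \<noteq> 0" "flt ?T q4 = Fin (l * qcr q1 q2 q3 q4 * inverse l)"
    using normal_conj[OF assms(1)] by blast
  hence "qcr p1 p2 p3 p4 = l * qcr q1 q2 q3 q4 * inverse l" using T g S by auto
  thus "RH q1 q2 q3 q4 = RH p1 p2 p3 p4" using conj_inv[OF l(1)] RH_iff by metis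
next
  assume "RH q1 q2 q3 q4 = RH p1 p2 p3 p4"
  then obtain l where l: "l \<noteq> 0" "qcr p1 p2 p3 p4 = l * qcr q1 q2 q3 q4 * inverse l"
    using conj_exists RH_iff by metis
  obtain S where S: "qGL2 S" "flt S q1 = Fin 0" "flt S q2 = Fin 1" "flt S q3 = Infty"
     "flt S q4 = Fin (qcr q1 q2 q3 q4)" using normal_exists[OF assms(1)] by blast
  obtain S' where S': "qGL2 S'" "flt S' p1 = Fin 0" "flt S' p2 = Fin 1" "flt S' p3 = Infty"
     "flt S' p4 = Fin (qcr p1 p2 p3 p4)" using normal_exists[OF assms(2)] by blast
  obtain H where H: "qGL2 H" "\<forall>p. flt H (flt S' p) = p" using qGL2_inv[OF S'(1)] by blast
  let ?C = "(l, 0, 0, l)"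
  have C: "qGL2 ?C" using qGL2_conj l(1) by blast
  let ?g = "qmat_mult H (qmat_mult ?C S)"
  have gf: "flt ?g x = flt H (flt ?C (flt S x))" for x
    using flt_comp[OF qGL2_mult[OF C S(1)]] flt_comp[OF S(1)] by simp
  have Cf: "flt ?C (Fin x) = Fin (l * x * inverse l)" "flt ?C Infty = Infty" for x
    using l(1) by (simp_all add: qbridge)
  have "qGL2 ?g" using qGL2_mult H(1) C S(1) by blast
  moreover have "flt ?g q1 = p1" using gf Cf S S' H(2) l(1) by (metis mult_zero_right mult_zero_left)
  moreover have "flt ?g q2 = p2" using gf Cf S S' H(2) l(1) by (metis mult_1_right right_inverse)
  moreover have "flt ?g q3 = p3" using gf Cf S S' H(2) by metis
  moreover have "flt ?g q4 = p4" using gf Cf S S' H(2) l(2) by metis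
  ultimately show "\<exists>g. qGL2 g \<and> flt g q1 = p1 \<and> flt g q2 = p2 \<and> flt g q3 = p3 \<and> flt g q4 = p4" by blast
qed


end
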